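(* Let $H:[0,1]\times\mathbb R\to\mathbb R$ be continuous, coercive in $p$, and quasiconvex in $p$ with $\mathrm{Int}\{p: H(s,p)\le b\}=\{p:H(s,p)<b\}$ for all $s\in[0,1]$, $b\in\mathbb R$. Set $a_H=\max_{s\in[0,1]}\min_{p\in\mathbb R}H(s,p)$. Let $a\ge a_H$, and if $a=a_H$ assume in addition that $s\mapsto \min_p H(s,p)$ is constant on $[0,1]$. For $s\in[0,1]$ put $\sigma^+_a(s)=\max\{p: H(s,p)=a\}$ and $\sigma^-_a(s)=\min\{p:H(s,p)=a\}$. Let $\alpha,\beta\in\mathbb R$ satisfy $$\int_0^1\sigma^-_a(t)\,dt\le \beta-\alpha\le\int_0^1\sigma^+_a(t)\,dt .$$ Then the function $$w(s)=\min\Big\{\alpha+\int_0^s\sigma^+_a(t)\,dt,\ \beta-\int_s^1\sigma^-_a(t)\,dt\Big\},\qquad s\in[0,1],$$ is the unique function, continuous on $[0,1]$, which is a viscosity solution of $H(s,u'(s))=a$ in $(0,1)$ and satisfies $u(0)=\alpha$, $u(1)=\beta$.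
   Context: Coercive in $p$ means $H(s,p)\to+\infty$ as $|p|\to\infty$, uniformly in $s\in[0,1]$; quasiconvex in $p$ means that all sublevel sets $\{p:H(s,p)\le b\}$ are convex. Solutions are understood in the viscosity sense. *)

theory Defs
  imports "HOL-Analysis.Analysis"
begin

definition C1_fun :: "(real \<Rightarrow> real) \<Rightarrow> bool" where
  "C1_fun \<phi> \<longleftrightarrow> (\<exists>\<phi>'. (\<forall>x. (\<phi> has_real_derivative \<phi>' x) (at x)) \<and> continuous_on UNIV \<phi>')"

definition visc_subsol :: "(real \<Rightarrow> real \<Rightarrow> real) \<Rightarrow> real \<Rightarrow> (real \<Rightarrow> real) \<Rightarrow> bool" where
  "visc_subsol H a u \<longleftrightarrow>
     (\<forall>s0\<in>{0<..<1}. \<forall>\<phi>. C1_fun \<phi> \<longrightarrow>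
        (\<exists>e>0. \<forall>s\<in>{0<..<1}. \<bar>s - s0\<bar> < e \<longrightarrow> u s - \<phi> s \<le> u s0 - \<phi> s0) \<longrightarrow>
        H s0 (deriv \<phi> s0) \<le> a)"

definition visc_supersol :: "(real \<Rightarrow> real \<Rightarrow> real) \<Rightarrow> real \<Rightarrow> (real \<Rightarrow> real) \<Rightarrow> bool" where
  "visc_supersol H a u \<longleftrightarrow>
     (\<forall>s0\<in>{0<..<1}. \<forall>\<phi>. C1_fun \<phi> \<longrightarrow>
        (\<exists>e>0. \<forall>s\<in>{0<..<1}. \<bar>s - s0\<bar> < e \<longrightarrow> u s - \<phi> s \<ge> u s0 - \<phi> s0) \<longrightarrow>
        H s0 (deriv \<phi> s0) \<ge> a)"

definition visc_sol :: "(real \<Rightarrow> real \<Rightarrow> real) \<Rightarrow> real \<Rightarrow> (real \<Rightarrow> real) \<Rightarrow> bool" where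
  "visc_sol H a u \<longleftrightarrow> visc_subsol H a u \<and> visc_supersol H a u"

text \<open>min_p H(s,p) (attained under coercivity and continuity).\<close>
definition minH :: "(real \<Rightarrow> real \<Rightarrow> real) \<Rightarrow> real \<Rightarrow> real" where
  "minH H s = (INF p. H s p)"

definition aH :: "(real \<Rightarrow> real \<Rightarrow> real) \<Rightarrow> real" where
  "aH H = (SUP s\<in>{0..1}. minH H s)"

text \<open>sigma^+_a(s) = max{p. H(s,p)=a}, sigma^-_a(s) = min{p. H(s,p)=a}
  (the sets are compact and nonempty under the hypotheses).\<close>
definition sigma_plus :: "(real \<Rightarrow> real \<Rightarrow> real) \<Rightarrow> real \<Rightarrow> real \<Rightarrow> real" where
  "sigma_plus H a s = Sup {p. H s p = a}"

definition sigma_minus :: "(real \<Rightarrow> real \<Rightarrow> real) \<Rightarrow> real \<Rightarrow> real \<Rightarrow> real" where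
  "sigma_minus H a s = Inf {p. H s p = a}"

end

theory Submission
  imports Defs
begin


definition prim :: "(real \<Rightarrow> real) \<Rightarrow> real \<Rightarrow> real" where
  "prim g x = integral {0..x} g - integral {x..0} g"

lemma prim_local:
  assumes g: "continuous_on UNIV g" and N: "-N \<le> y" and N0: "0 \<le> N"
  shows "prim g y = integral {-N..y} g - integral {-N..0} g"
proof (cases "0 \<le> y")
  case True
  have i: "g integrable_on {-N..y}" using g integrable_continuous_real continuous_on_subset by blast
  have "integral {-N..0} g + integral {0..y} g = integral {-N..y} g"
    using Henstock_Kurzweil_Integration.integral_combine[OF _ _ i, of 0] True N N0 by auto
  moreover have "integral {y..0} g = 0"
  proof (cases "y = 0")
    case True then show ?thesis by simp
  next
    case False then have "{y..0} = {}" using \<open>0\<le>y\<close> by auto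
    then show ?thesis by simp
  qed
  ultimately show ?thesis unfolding prim_def by linarith
next
  case False
  have i: "g integrable_on {-N..0}" using g integrable_continuous_real continuous_on_subset by blast
  have "integral {-N..y} g + integral {y..0} g = integral {-N..0} g"
    using Henstock_Kurzweil_Integration.integral_combine[OF _ _ i, of y] False N N0 by auto
  moreover have "{0..y} = {}" using False by auto
  ultimately show ?thesis unfolding prim_def by simp
qed

lemma prim_deriv:
  assumes g: "continuous_on UNIV g"
  shows "(prim g has_real_derivative g x) (at x)"
proof -
  define N where "N = \<bar>x\<bar> + 1"
  have d: "((\<lambda>y. integral {-N..y} g) has_real_derivative g x) (at x within {-N..N})"
    by (rule integral_has_real_derivative) (use g continuous_on_subset N_def in auto)
  have "x \<in> interior {-N..N}" unfolding N_def by auto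
  then have d2: "((\<lambda>y. integral {-N..y} g) has_real_derivative g x) (at x)"
    using d at_within_interior by metis
  have d3: "((\<lambda>y. integral {-N..y} g - integral {-N..0} g) has_real_derivative g x) (at x)"
    using DERIV_diff[OF d2 DERIV_const] by simp
  show ?thesis
    by (rule has_field_derivative_transform_within_open[OF d3, of "{-N<..}"])
       (auto simp: N_def prim_local[OF g, of "\<bar>x\<bar> + 1"])
qed

lemma prim_C1: "continuous_on UNIV g \<Longrightarrow> C1_fun (prim g)"
  unfolding C1_fun_def using prim_deriv by blast

lemma prim_0[simp]: "prim g 0 = 0" unfolding prim_def by simp

lemma prim_diff:
  assumes g: "continuous_on UNIV g" and "s \<le> t"
  shows "integral {s..t} g = prim g t - prim g s"
proof -
  define N where "N = \<bar>s\<bar> + \<bar>t\<bar> + 1"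
  have i: "g integrable_on {-N..t}" using g integrable_continuous_real continuous_on_subset by blast
  have "integral {-N..s} g + integral {s..t} g = integral {-N..t} g"
    using Henstock_Kurzweil_Integration.integral_combine[OF _ _ i, of s] assms by (auto simp: N_def)
  then show ?thesis using prim_local[OF g, of N s] prim_local[OF g, of N t] assms
    by (auto simp: N_def)
qed

definition ext :: "(real \<Rightarrow> real) \<Rightarrow> real \<Rightarrow> real" where
  "ext f x = f (max 0 (min 1 x))"

lemma ext_cont: "continuous_on {0..1} f \<Longrightarrow> continuous_on UNIV (ext f)"
  unfolding ext_def
  by (rule continuous_on_compose2[of "{0..1}" f]) (auto intro!: continuous_intros)

lemma ext_eq[simp]: "x \<in> {0..1} \<Longrightarrow> ext f x = f x"
  unfolding ext_def by simp


locale setting =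
  fixes H :: "real \<Rightarrow> real \<Rightarrow> real" and a :: real
  assumes cont: "continuous_on ({0..1} \<times> UNIV) (\<lambda>(s, p). H s p)"
    and coercive: "\<forall>M. \<exists>R. \<forall>s\<in>{0..1}. \<forall>p. \<bar>p\<bar> > R \<longrightarrow> H s p > M"
    and quasiconvex: "\<forall>s\<in>{0..1}. \<forall>b. convex {p. H s p \<le> b}"
    and interior_cond: "\<forall>s\<in>{0..1}. \<forall>b. interior {p. H s p \<le> b} = {p. H s p < b}"
    and a_ge: "a \<ge> aH H"
    and a_eq: "a = aH H \<Longrightarrow> (\<exists>c. \<forall>s\<in>{0..1}. minH H s = c)"
begin

abbreviation "sp \<equiv> sigma_plus H a"
abbreviation "sm \<equiv> sigma_minus H a"

lemma Hs_cont: "s \<in> {0..1} \<Longrightarrow> continuous_on UNIV (H s)"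
proof -
  assume s: "s \<in> {0..1}"
  have "continuous_on UNIV ((\<lambda>(s, p). H s p) \<circ> (\<lambda>p. (s, p)))"
    by (rule continuous_on_compose) (use s in \<open>auto intro!: continuous_intros continuous_on_subset[OF cont]\<close>)
  then show ?thesis by (simp add: o_def)
qed

lemma Hp_cont: "continuous_on {0..1} (\<lambda>s. H s p)"
proof -
  have "continuous_on {0..1} ((\<lambda>(s, p). H s p) \<circ> (\<lambda>s. (s, p)))"
    by (rule continuous_on_compose) (auto intro!: continuous_intros continuous_on_subset[OF cont])
  then show ?thesis by (simp add: o_def)
qed

lemma min_attained:
  assumes s: "s \<in> {0..1}"
  shows "\<exists>p0. \<forall>p. H s p0 \<le> H s p"
proof -
  obtain R where R: "\<forall>p. \<bar>p\<bar> > R \<longrightarrow> H s p > H s 0"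
    using spec[OF coercive, of "H s 0"] s by blast
  have "R \<ge> 0" using R by (metis abs_ge_zero abs_zero linorder_not_le order_less_irrefl)
  have "continuous_on {-R..R} (H s)" using continuous_on_subset Hs_cont[OF s] by blast
  then obtain p0 where p0: "p0 \<in> {-R..R}" "\<forall>p\<in>{-R..R}. H s p0 \<le> H s p"
    using continuous_attains_inf[of "{-R..R}" "H s"] \<open>R\<ge>0\<close> by auto
  have "H s p0 \<le> H s p" for p
  proof (cases "\<bar>p\<bar> > R")
    case True
    then have "H s p > H s 0" using R by blast
    moreover have "H s p0 \<le> H s 0" using p0 \<open>R\<ge>0\<close> by auto
    ultimately show ?thesis by simp
  next
    case False then show ?thesis using p0 by (auto simp: abs_le_iff not_less)
  qed
  then show ?thesis by blast
qed

lemma minH_eq: "(\<forall>p. H s p0 \<le> H s p) \<Longrightarrow> minH H s = H s p0"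
  unfolding minH_def by (rule cInf_eq_minimum) auto

lemma minH_le: "s \<in> {0..1} \<Longrightarrow> minH H s \<le> H s p"
  using min_attained minH_eq by metis

lemma bdd_minH: "bdd_above (minH H ` {0..1})"
proof -
  have "compact ((\<lambda>s. H s 0) ` {0..1})"
    by (rule compact_continuous_image[OF Hp_cont]) auto
  then obtain B where "\<forall>x\<in>(\<lambda>s. H s 0) ` {0..1}. x \<le> B"
    using compact_imp_bounded bounded_has_Sup(1) by (metis bdd_above_def bounded_imp_bdd_above)
  then show ?thesis using minH_le unfolding bdd_above_def by (metis image_iff order_trans)
qed

lemma minH_le_a: "s \<in> {0..1} \<Longrightarrow> minH H s \<le> a"
  using cSUP_upper[OF _ bdd_minH, of s] a_ge unfolding aH_def by auto

lemma exists_le: "s \<in> {0..1} \<Longrightarrow> \<exists>p. H s p \<le> a"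
  using min_attained minH_eq minH_le_a by (metis order_refl order_trans)

lemma bound: obtains R where "R \<ge> 0" "\<And>s p. s \<in> {0..1} \<Longrightarrow> \<bar>p\<bar> > R \<Longrightarrow> H s p > a"
proof -
  obtain R where R: "\<forall>s\<in>{0..1}. \<forall>p. \<bar>p\<bar> > R \<longrightarrow> H s p > a"
    using spec[OF coercive, of a] by blast
  show ?thesis using R that[of "max R 0"] by auto
qed

lemma interval:
  assumes s: "s \<in> {0..1}"
  shows "sm s \<le> sp s" "\<And>p. H s p \<le> a \<longleftrightarrow> sm s \<le> p \<and> p \<le> sp s"
    "\<And>p. H s p < a \<longleftrightarrow> sm s < p \<and> p < sp s" "H s (sm s) = a" "H s (sp s) = a"
proof -
  define S where "S = {p. H s p \<le> a}"
  obtain R where R: "R \<ge> 0" "\<And>s p. s \<in> {0..1} \<Longrightarrow> \<bar>p\<bar> > R \<Longrightarrow> H s p > a" using bound by blast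
  have cl: "closed S" unfolding S_def
    using closed_Collect_le[OF Hs_cont[OF s] continuous_on_const] by simp
  have sub: "S \<subseteq> {-R..R}"
  proof
    fix p assume "p \<in> S"
    then have "\<not> R < \<bar>p\<bar>" using R(2)[OF s, of p] unfolding S_def by auto
    then show "p \<in> {-R..R}" by auto
  qed
  have ne: "S \<noteq> {}" unfolding S_def using exists_le[OF s] by auto
  have bb: "bdd_below S" "bdd_above S" using sub by (auto intro: bdd_below_mono bdd_above_mono)
  define l where "l = Inf S"
  define r where "r = Sup S"
  have lS: "l \<in> S" unfolding l_def using closed_contains_Inf[OF ne bb(1) cl] .
  have rS: "r \<in> S" unfolding r_def using closed_contains_Sup[OF ne bb(2) cl] .
  have cv: "convex S" unfolding S_def using quasiconvex s by blast
  have Seq: "S = {l..r}"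
  proof
    show "S \<subseteq> {l..r}" unfolding l_def r_def using bb by (auto intro: cInf_lower cSup_upper)
    show "{l..r} \<subseteq> S"
    proof
      fix x assume "x \<in> {l..r}"
      then show "x \<in> S" using is_interval_convex_1[of S] cv lS rS by (meson atLeastAtMost_iff mem_is_interval_1_I)
    qed
  qed
  have lr: "l \<le> r" using lS Seq by auto
  have lt: "{p. H s p < a} = {l<..<r}"
  proof -
    have "{p. H s p < a} = interior S" using interior_cond s unfolding S_def by simp
    also have "\<dots> = {l<..<r}" using Seq by simp
    finally show ?thesis .
  qed
  have le: "{p. H s p \<le> a} = {l..r}" using Seq S_def by simp
  have eq: "{p. H s p = a} = {l, r}"
  proof -
    have "{p. H s p = a} = {p. H s p \<le> a} - {p. H s p < a}" by auto
    also have "\<dots> = {l, r}" using le lt lr by auto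
    finally show ?thesis .
  qed
  have smv: "sm s = l" unfolding sigma_minus_def eq using lr by (intro cInf_eq_minimum) auto
  have spv: "sp s = r" unfolding sigma_plus_def eq using lr by (intro cSup_eq_maximum) auto
  show "sm s \<le> sp s" using lr smv spv by simp
  show "\<And>p. H s p \<le> a \<longleftrightarrow> sm s \<le> p \<and> p \<le> sp s" using le smv spv by (simp add: set_eq_iff)
  show "\<And>p. H s p < a \<longleftrightarrow> sm s < p \<and> p < sp s" using lt smv spv by (simp add: set_eq_iff)
  show "H s (sm s) = a" "H s (sp s) = a" using eq smv spv by (auto simp: set_eq_iff)
qed

end


context setting begin

lemma sig_bound: obtains R where "R \<ge> 0" "\<And>s. s \<in> {0..1} \<Longrightarrow> \<bar>sp s\<bar> \<le> R \<and> \<bar>sm s\<bar> \<le> R"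
proof -
  obtain R where R: "R \<ge> 0" "\<And>s p. s \<in> {0..1} \<Longrightarrow> \<bar>p\<bar> > R \<Longrightarrow> H s p > a" using bound by blast
  have "\<bar>sp s\<bar> \<le> R \<and> \<bar>sm s\<bar> \<le> R" if s: "s \<in> {0..1}" for s
    using R(2)[OF s, of "sp s"] R(2)[OF s, of "sm s"] interval(4,5)[OF s] by force
  then show ?thesis using that R(1) by blast
qed

lemma Hcase_cont: "continuous_on ({0..1} \<times> UNIV) (\<lambda>z. H (fst z) (snd z))"
  using cont by (simp add: case_prod_beta')

lemma sp_usc:
  assumes s0: "s0 \<in> {0..1}" and e: "e > 0"
  shows "\<exists>d>0. \<forall>t\<in>{0..1}. \<bar>t - s0\<bar> < d \<longrightarrow> sp t < sp s0 + e"
proof -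
  obtain R where R: "R \<ge> 0" "\<And>s. s \<in> {0..1} \<Longrightarrow> \<bar>sp s\<bar> \<le> R \<and> \<bar>sm s\<bar> \<le> R" using sig_bound by blast
  define c where "c = sp s0 + e"
  define K where "K = ({0..1}::real set) \<times> {c..R}"
  define C where "C = {z \<in> K. H (fst z) (snd z) \<le> a}"
  have "closed C" unfolding C_def K_def
    by (rule continuous_on_closed_Collect_le)
       (auto intro!: continuous_on_subset[OF Hcase_cont] closed_Times)
  moreover have "bounded C" unfolding C_def K_def
    by (rule bounded_subset[of "{0..1} \<times> {c..R}"]) (auto intro: bounded_Times)
  ultimately have "compact C" using compact_eq_bounded_closed by blast
  then have "compact (fst ` C)" by (intro compact_continuous_image continuous_intros)
  then have cl: "closed (fst ` C)" by (rule compact_imp_closed)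
  have nin: "s0 \<notin> fst ` C"
  proof
    assume "s0 \<in> fst ` C"
    then obtain p where "(s0, p) \<in> C" by force
    then have "p \<ge> c" "H s0 p \<le> a" unfolding C_def K_def by auto
    then show False using interval(2)[OF s0, of p] e unfolding c_def by auto
  qed
  obtain d where d: "d > 0" "\<And>t. dist t s0 < d \<Longrightarrow> t \<notin> fst ` C"
    using open_Compl[OF cl] nin unfolding open_dist by (metis ComplI ComplD dist_commute)
  have "sp t < c" if t: "t \<in> {0..1}" "\<bar>t - s0\<bar> < d" for t
  proof (rule ccontr)
    assume "\<not> sp t < c"
    then have "(t, sp t) \<in> C" unfolding C_def K_def using R(2)[OF t(1)] t(1) interval(5)[OF t(1)]
      by auto
    then have "t \<in> fst ` C" by force
    then show False using d t by (auto simp: dist_real_def)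
  qed
  then show ?thesis using d(1) unfolding c_def by blast
qed

lemma sm_lsc:
  assumes s0: "s0 \<in> {0..1}" and e: "e > 0"
  shows "\<exists>d>0. \<forall>t\<in>{0..1}. \<bar>t - s0\<bar> < d \<longrightarrow> sm t > sm s0 - e"
proof -
  obtain R where R: "R \<ge> 0" "\<And>s. s \<in> {0..1} \<Longrightarrow> \<bar>sp s\<bar> \<le> R \<and> \<bar>sm s\<bar> \<le> R" using sig_bound by blast
  define c where "c = sm s0 - e"
  define K where "K = ({0..1}::real set) \<times> {-R..c}"
  define C where "C = {z \<in> K. H (fst z) (snd z) \<le> a}"
  have "closed C" unfolding C_def K_def
    by (rule continuous_on_closed_Collect_le)
       (auto intro!: continuous_on_subset[OF Hcase_cont] closed_Times)
  moreover have "bounded C" unfolding C_def K_def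
    by (rule bounded_subset[of "{0..1} \<times> {-R..c}"]) (auto intro: bounded_Times)
  ultimately have "compact C" using compact_eq_bounded_closed by blast
  then have "compact (fst ` C)" by (intro compact_continuous_image continuous_intros)
  then have cl: "closed (fst ` C)" by (rule compact_imp_closed)
  have nin: "s0 \<notin> fst ` C"
  proof
    assume "s0 \<in> fst ` C"
    then obtain p where "(s0, p) \<in> C" by force
    then have "p \<le> c" "H s0 p \<le> a" unfolding C_def K_def by auto
    then show False using interval(2)[OF s0, of p] e unfolding c_def by auto
  qed
  obtain d where d: "d > 0" "\<And>t. dist t s0 < d \<Longrightarrow> t \<notin> fst ` C"
    using open_Compl[OF cl] nin unfolding open_dist by (metis ComplI ComplD dist_commute)
  have "sm t > c" if t: "t \<in> {0..1}" "\<bar>t - s0\<bar> < d" for t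
  proof (rule ccontr)
    assume "\<not> sm t > c"
    then have "(t, sm t) \<in> C" unfolding C_def K_def using R(2)[OF t(1)] t(1) interval(4)[OF t(1)]
      by auto
    then have "t \<in> fst ` C" by force
    then show False using d t by (auto simp: dist_real_def)
  qed
  then show ?thesis using d(1) unfolding c_def by blast
qed

lemma Hp_lt_near:
  assumes s0: "s0 \<in> {0..1}" and lt: "H s0 p < a"
  shows "\<exists>d>0. \<forall>t\<in>{0..1}. \<bar>t - s0\<bar> < d \<longrightarrow> H t p < a"
proof -
  obtain d where d: "d > 0" "\<forall>t\<in>{0..1}. dist t s0 < d \<longrightarrow> dist (H t p) (H s0 p) < a - H s0 p"
    using Hp_cont[of p] s0 lt unfolding continuous_on_iff by (metis diff_gt_0_iff_gt)
  show ?thesis using d by (intro exI[of _ d]) (auto simp: dist_real_def abs_less_iff)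
qed

lemma sp_lsc:
  assumes s0: "s0 \<in> {0..1}" and e: "e > 0" and nd: "sm s0 < sp s0"
  shows "\<exists>d>0. \<forall>t\<in>{0..1}. \<bar>t - s0\<bar> < d \<longrightarrow> sp t > sp s0 - e"
proof -
  define p where "p = max (sp s0 - e/2) ((sm s0 + sp s0)/2)"
  have "H s0 p < a" using interval(3)[OF s0, of p] nd e unfolding p_def by auto
  then obtain d where d: "d > 0" "\<forall>t\<in>{0..1}. \<bar>t - s0\<bar> < d \<longrightarrow> H t p < a"
    using Hp_lt_near[OF s0] by blast
  have "sp t > sp s0 - e" if "t \<in> {0..1}" "\<bar>t - s0\<bar> < d" for t
    using d(2) that interval(3)[OF that(1), of p] e unfolding p_def by fastforce
  then show ?thesis using d(1) by blast
qed

lemma sm_usc: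
  assumes s0: "s0 \<in> {0..1}" and e: "e > 0" and nd: "sm s0 < sp s0"
  shows "\<exists>d>0. \<forall>t\<in>{0..1}. \<bar>t - s0\<bar> < d \<longrightarrow> sm t < sm s0 + e"
proof -
  define p where "p = min (sm s0 + e/2) ((sm s0 + sp s0)/2)"
  have "H s0 p < a" using interval(3)[OF s0, of p] nd e unfolding p_def by auto
  then obtain d where d: "d > 0" "\<forall>t\<in>{0..1}. \<bar>t - s0\<bar> < d \<longrightarrow> H t p < a"
    using Hp_lt_near[OF s0] by blast
  have "sm t < sm s0 + e" if "t \<in> {0..1}" "\<bar>t - s0\<bar> < d" for t
    using d(2) that interval(3)[OF that(1), of p] e unfolding p_def by fastforce
  then show ?thesis using d(1) by blast
qed

lemma nondeg: "a > aH H \<Longrightarrow> s \<in> {0..1} \<Longrightarrow> sm s < sp s"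
proof -
  assume a: "a > aH H" and s: "s \<in> {0..1}"
  obtain p0 where p0: "\<forall>p. H s p0 \<le> H s p" using min_attained[OF s] by blast
  have "minH H s \<le> aH H" unfolding aH_def using cSUP_upper[OF s bdd_minH] .
  then have "H s p0 < a" using minH_eq[OF p0] a by simp
  then show ?thesis using interval(3)[OF s] by fastforce
qed

lemma deg: "a = aH H \<Longrightarrow> s \<in> {0..1} \<Longrightarrow> sm s = sp s"
proof -
  assume a: "a = aH H" and s: "s \<in> {0..1}"
  obtain c where c: "\<forall>s\<in>{0..1}. minH H s = c" using a_eq[OF a] by blast
  have "aH H = c" unfolding aH_def using c by (simp add: cSUP_const)
  then have "minH H s = a" using c s a by simp
  then have "H s p \<ge> a" for p using minH_le[OF s, of p] by simp
  have "\<not> (sm s < sp s)"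
  proof
    assume "sm s < sp s"
    then have "sm s < (sm s + sp s)/2 \<and> (sm s + sp s)/2 < sp s" by (auto simp: field_simps)
    then have "H s ((sm s + sp s)/2) < a" using interval(3)[OF s] by blast
    then show False using \<open>\<And>p. H s p \<ge> a\<close> not_le by blast
  qed
  then show ?thesis using interval(1)[OF s] by simp
qed

lemma sig_cont: "continuous_on {0..1} sp" "continuous_on {0..1} sm"
proof -
  have both: "(\<exists>d>0. \<forall>t\<in>{0..1}. \<bar>t - s0\<bar> < d \<longrightarrow> \<bar>sp t - sp s0\<bar> < e) \<and>
              (\<exists>d>0. \<forall>t\<in>{0..1}. \<bar>t - s0\<bar> < d \<longrightarrow> \<bar>sm t - sm s0\<bar> < e)"
    if s0: "s0 \<in> {0..1}" and e: "e > 0" for s0 e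
  proof -
    obtain d1 where d1: "d1 > 0" "\<forall>t\<in>{0..1}. \<bar>t - s0\<bar> < d1 \<longrightarrow> sp t < sp s0 + e"
      using sp_usc[OF s0 e] by blast
    obtain d2 where d2: "d2 > 0" "\<forall>t\<in>{0..1}. \<bar>t - s0\<bar> < d2 \<longrightarrow> sm t > sm s0 - e"
      using sm_lsc[OF s0 e] by blast
    obtain d3 where d3: "d3 > 0" "\<forall>t\<in>{0..1}. \<bar>t - s0\<bar> < d3 \<longrightarrow> sp t > sp s0 - e \<and> sm t < sm s0 + e"
    proof (cases "a > aH H")
      case True
      obtain d4 where d4: "d4 > 0" "\<forall>t\<in>{0..1}. \<bar>t - s0\<bar> < d4 \<longrightarrow> sp t > sp s0 - e"
        using sp_lsc[OF s0 e nondeg[OF True s0]] by blast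
      obtain d5 where d5: "d5 > 0" "\<forall>t\<in>{0..1}. \<bar>t - s0\<bar> < d5 \<longrightarrow> sm t < sm s0 + e"
        using sm_usc[OF s0 e nondeg[OF True s0]] by blast
      show ?thesis using d4 d5 by (intro that[of "min d4 d5"]) auto
    next
      case False
      then have aa: "a = aH H" using a_ge by simp
      have "sp t > sp s0 - e \<and> sm t < sm s0 + e" if "t \<in> {0..1}" "\<bar>t - s0\<bar> < min d1 d2" for t
        using d1(2) d2(2) that deg[OF aa that(1)] deg[OF aa s0] by auto
      then show ?thesis using d1 d2 by (intro that[of "min d1 d2"]) auto
    qed
    show ?thesis
    proof
      show "\<exists>d>0. \<forall>t\<in>{0..1}. \<bar>t - s0\<bar> < d \<longrightarrow> \<bar>sp t - sp s0\<bar> < e"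
        using d1 d3 by (intro exI[of _ "min d1 d3"]) (auto simp: abs_less_iff)
      show "\<exists>d>0. \<forall>t\<in>{0..1}. \<bar>t - s0\<bar> < d \<longrightarrow> \<bar>sm t - sm s0\<bar> < e"
        using d2 d3 by (intro exI[of _ "min d2 d3"]) (auto simp: abs_less_iff)
    qed
  qed
  show "continuous_on {0..1} sp" unfolding continuous_on_iff dist_real_def
    using both by blast
  show "continuous_on {0..1} sm" unfolding continuous_on_iff dist_real_def
    using both by blast
qed

end


lemma C1I:
  assumes d: "\<And>x. (f has_real_derivative f' x) (at x)" and c: "continuous_on UNIV f'"
  shows "C1_fun f" "\<And>x. deriv f x = f' x"
  using d c unfolding C1_fun_def by (auto intro: DERIV_imp_deriv)

lemma C1D:
  assumes "C1_fun f"
  shows "(f has_real_derivative deriv f x) (at x)"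
  using assms unfolding C1_fun_def by (metis DERIV_imp_deriv)

lemma C1_cont_deriv:
  assumes "C1_fun f"
  shows "continuous_on UNIV (deriv f)"
proof -
  obtain f' where f': "\<forall>x. (f has_real_derivative f' x) (at x)" "continuous_on UNIV f'"
    using assms unfolding C1_fun_def by blast
  have "deriv f = f'" using f'(1) DERIV_imp_deriv by blast
  then show ?thesis using f'(2) by simp
qed

definition pen :: "real \<Rightarrow> real \<Rightarrow> real" where
  "pen c x = (max (x - c) 0)^2"

lemma pen_deriv: "(pen c has_real_derivative 2 * max (x - c) 0) (at x)"
proof (cases "x = c")
  case True
  have "((\<lambda>h. (pen c (x + h) - pen c x) / h) \<longlongrightarrow> 0) (at 0)"
  proof (rule Lim_null_comparison[where g="\<lambda>h::real. \<bar>h\<bar>"])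
    show "\<forall>\<^sub>F h in at 0. norm ((pen c (x + h) - pen c x) / h) \<le> \<bar>h\<bar>"
    proof (rule always_eventually, rule allI)
      fix h :: real
      show "norm ((pen c (x + h) - pen c x) / h) \<le> \<bar>h\<bar>"
      proof (cases "h > 0")
        case True
        then have "pen c (x + h) - pen c x = h * h" using \<open>x = c\<close> by (simp add: pen_def power2_eq_square)
        then show ?thesis using True by simp
      next
        case False
        then have "pen c (x + h) - pen c x = 0" using \<open>x = c\<close> by (simp add: pen_def max_def)
        then show ?thesis by simp
      qed
    qed
    show "((\<lambda>h::real. \<bar>h\<bar>) \<longlongrightarrow> 0) (at 0)"
    proof -
      have "isCont (\<lambda>x::real. \<bar>x\<bar>) 0" by (intro continuous_intros)
      then show ?thesis by (simp add: isCont_def)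
    qed
  qed
  then show ?thesis using True by (simp add: DERIV_def)
next
  case False
  show ?thesis
  proof (cases "x > c")
    case True
    have "((\<lambda>y. (y - c)^2) has_real_derivative 2 * max (x - c) 0) (at x)"
      using True by (auto intro!: derivative_eq_intros)
    then show ?thesis
      by (rule has_field_derivative_transform_within_open[of _ _ _ "{c<..}"])
         (use True in \<open>auto simp: pen_def\<close>)
  next
    case F: False
    then have xc: "x < c" using False by simp
    have "((\<lambda>y. 0) has_real_derivative 2 * max (x - c) 0) (at x)" using xc by simp
    then show ?thesis
      by (rule has_field_derivative_transform_within_open[of _ _ _ "{..<c}"])
         (use xc in \<open>auto simp: pen_def\<close>)
  qed
qed

lemma pen_C1: "C1_fun (pen c)" "deriv (pen c) x = 2 * max (x - c) 0"
proof -
  have "continuous_on UNIV (\<lambda>x. 2 * max (x - c) 0)" by (intro continuous_intros)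
  then show "C1_fun (pen c)" "deriv (pen c) x = 2 * max (x - c) 0" using C1I[OF pen_deriv] by auto
qed

lemma peak:
  fixes f :: "real \<Rightarrow> real"
  assumes fc: "continuous_on {s..t} f" and st: "s < t" and lt: "f s < f t"
  shows "\<exists>x0 c M. s < x0 \<and> x0 < t \<and> M \<ge> 0 \<and>
           (\<forall>x\<in>{s..t}. f x - M * pen c x \<le> f x0 - M * pen c x0)"
proof -
  define k where "k = f t - f s"
  have k: "k > 0" using lt k_def by simp
  have tin: "t \<in> {s..t}" using st by simp
  have k2: "k/2 > 0" using k by simp
  obtain d where d: "d > 0" "\<forall>x\<in>{s..t}. dist x t < d \<longrightarrow> dist (f x) (f t) < k/2"
    using continuous_on_iff[THEN iffD1, OF fc, rule_format, OF tin k2] by blast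
  define c where "c = max (s + (t-s)/2) (t - d/2)"
  have c1: "s + (t-s)/2 < t" "s < s + (t-s)/2" "t - d/2 < t" "t - d < t - d/2"
    using st d by (simp_all add: field_simps)
  have c2: "s + (t-s)/2 \<le> c" "t - d/2 \<le> c" "c < t" using c1 by (simp_all add: c_def)
  have sc: "s < c" using c1(2) c2(1) by (rule less_le_trans)
  have c: "s < c" "c < t" "c \<in> {s..t}" using sc c2(3) by auto
  have "t - d < c" using c1(4) c2(2) by (rule less_le_trans)
  then have "dist c t < d" using c2(3) unfolding dist_real_def by argo
  then have "dist (f c) (f t) < k/2" using d(2) c(3) by blast
  then have fcgt: "f c > f s" unfolding k_def dist_real_def by argo
  define M where "M = (\<bar>f t - f c\<bar> + 1) / (t - c)^2"
  have M: "M \<ge> 0" unfolding M_def by simp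
  define g where "g x = f x - M * pen c x" for x
  have gc: "continuous_on {s..t} g" unfolding g_def pen_def
    by (intro continuous_intros fc)
  obtain x0 where x0: "x0 \<in> {s..t}" "\<forall>x\<in>{s..t}. g x \<le> g x0"
    using continuous_attains_sup[OF compact_Icc _ gc] st by auto
  have "g c = f c" "g s = f s" using c by (auto simp: g_def pen_def)
  have "(t - c)^2 > 0" using c by simp
  then have "M * pen c t = \<bar>f t - f c\<bar> + 1" using c unfolding M_def pen_def by (simp add: max_def)
  then have "g t \<le> f c - 1" unfolding g_def by simp
  have "g x0 \<ge> g c" using x0 c by blast
  then have "x0 \<noteq> s" "x0 \<noteq> t" using \<open>g c = f c\<close> \<open>g s = f s\<close> \<open>g t \<le> f c - 1\<close> fcgt by auto
  then show ?thesis using x0 M unfolding g_def by (intro exI[of _ x0] exI[of _ c] exI[of _ M]) auto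
qed

definition pen2 :: "real \<Rightarrow> real \<Rightarrow> real" where
  "pen2 c x = (max (c - x) 0)^2"

lemma pen2_eq: "pen2 c x = pen (-c) (-x)" unfolding pen_def pen2_def by (simp add: max_def)

lemma pen2_deriv: "(pen2 c has_real_derivative - (2 * max (c - x) 0)) (at x)"
proof -
  have "((\<lambda>x. pen (-c) (-x)) has_real_derivative (2 * max (- x - - c) 0) * (-1)) (at x)"
    by (rule DERIV_chain2[OF pen_deriv]) (auto intro!: derivative_eq_intros)
  then show ?thesis by (simp add: pen2_eq[abs_def])
qed

lemma pen2_C1: "C1_fun (pen2 c)" "deriv (pen2 c) x = - (2 * max (c - x) 0)"
proof -
  have "continuous_on UNIV (\<lambda>x. - (2 * max (c - x) 0))" by (intro continuous_intros)
  then show "C1_fun (pen2 c)" "deriv (pen2 c) x = - (2 * max (c - x) 0)" using C1I[OF pen2_deriv] by auto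
qed

lemma peak2:
  fixes f :: "real \<Rightarrow> real"
  assumes fc: "continuous_on {s..t} f" and st: "s < t" and lt: "f t < f s"
  shows "\<exists>x0 c M. s < x0 \<and> x0 < t \<and> M \<ge> 0 \<and>
           (\<forall>x\<in>{s..t}. f x - M * pen2 c x \<le> f x0 - M * pen2 c x0)"
proof -
  have fc': "continuous_on {-t..-s} (\<lambda>y. f (-y))"
    by (rule continuous_on_compose2[OF fc]) (auto intro!: continuous_intros)
  obtain x0 c M where P: "-t < x0" "x0 < -s" "M \<ge> 0"
     "\<forall>y\<in>{-t..-s}. f (-y) - M * pen c y \<le> f (-x0) - M * pen c x0"
    using peak[OF fc'] st lt by auto
  have "\<forall>x\<in>{s..t}. f x - M * pen2 (-c) x \<le> f (-x0) - M * pen2 (-c) (-x0)"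
  proof
    fix x assume "x \<in> {s..t}"
    then have "-x \<in> {-t..-s}" by auto
    then show "f x - M * pen2 (-c) x \<le> f (-x0) - M * pen2 (-c) (-x0)"
      using P(4)[rule_format, of "-x"] by (auto simp: pen2_eq)
  qed
  then show ?thesis using P by (intro exI[of _ "-x0"] exI[of _ "-c"] exI[of _ M]) auto
qed


locale setting2 = setting +
  fixes \<alpha> \<beta> :: real
  assumes lower: "integral {0..1} (sigma_minus H a) \<le> \<beta> - \<alpha>"
    and upper: "\<beta> - \<alpha> \<le> integral {0..1} (sigma_plus H a)"
begin

definition "gp = ext sp"
definition "gm = ext sm"
definition "Pp = prim gp"
definition "Pm = prim gm"
definition "At x = \<alpha> + Pp x"
definition "Bt x = \<beta> - Pm 1 + Pm x"
definition "w = (\<lambda>s. min (\<alpha> + integral {0..s} sp) (\<beta> - integral {s..1} sm))"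

lemma gp_cont: "continuous_on UNIV gp" unfolding gp_def using ext_cont sig_cont by blast
lemma gm_cont: "continuous_on UNIV gm" unfolding gm_def using ext_cont sig_cont by blast

lemma clamp01: "max 0 (min 1 x) \<in> {0..(1::real)}" by auto

lemma gm_le_gp: "gm x \<le> gp x"
  unfolding gm_def gp_def ext_def using interval(1)[OF clamp01] .

lemma At_deriv: "(At has_real_derivative gp x) (at x)"
  unfolding At_def[abs_def] Pp_def using prim_deriv[OF gp_cont] by (auto intro!: derivative_eq_intros)

lemma Bt_deriv: "(Bt has_real_derivative gm x) (at x)"
  unfolding Bt_def[abs_def] Pm_def using prim_deriv[OF gm_cont] by (auto intro!: derivative_eq_intros)

lemma At_cont: "continuous_on S At"
  using At_deriv by (meson DERIV_isCont continuous_at_imp_continuous_on)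
lemma Bt_cont: "continuous_on S Bt"
  using Bt_deriv by (meson DERIV_isCont continuous_at_imp_continuous_on)

lemma int_sp: "x \<in> {0..1} \<Longrightarrow> integral {0..x} sp = Pp x"
proof -
  assume x: "x \<in> {0..1}"
  have "integral {0..x} sp = integral {0..x} gp"
    using x by (intro integral_cong) (auto simp: gp_def)
  also have "\<dots> = Pp x - Pp 0" unfolding Pp_def using x by (intro prim_diff gp_cont) auto
  finally show ?thesis by (simp add: Pp_def)
qed

lemma int_sm: "x \<in> {0..1} \<Longrightarrow> integral {x..1} sm = Pm 1 - Pm x"
proof -
  assume x: "x \<in> {0..1}"
  have "integral {x..1} sm = integral {x..1} gm"
    using x by (intro integral_cong) (auto simp: gm_def)
  also have "\<dots> = Pm 1 - Pm x" unfolding Pm_def using x by (intro prim_diff gm_cont) auto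
  finally show ?thesis .
qed

lemma int_sm01: "integral {0..1} sm = Pm 1" using int_sm[of 0] by (simp add: Pm_def)
lemma int_sp01: "integral {0..1} sp = Pp 1" using int_sp[of 1] by simp

lemma w_eq: "x \<in> {0..1} \<Longrightarrow> w x = min (At x) (Bt x)"
  unfolding w_def At_def Bt_def using int_sp int_sm by simp

lemma At0: "At 0 = \<alpha>" by (simp add: At_def Pp_def)
lemma Bt1: "Bt 1 = \<beta>" by (simp add: Bt_def)

lemma mono_AB: "s \<le> t \<Longrightarrow> Bt t - Bt s \<le> At t - At s"
proof -
  assume st: "s \<le> t"
  have "(\<lambda>x. At x - Bt x) s \<le> (\<lambda>x. At x - Bt x) t"
  proof (rule DERIV_nonneg_imp_nondecreasing[OF st])
    fix x
    have "((\<lambda>x. At x - Bt x) has_real_derivative gp x - gm x) (at x)"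
      by (rule DERIV_diff[OF At_deriv Bt_deriv])
    then show "\<exists>y. ((\<lambda>x. At x - Bt x) has_real_derivative y) (at x) \<and> y \<ge> 0"
      using gm_le_gp[of x] by auto
  qed
  then show ?thesis by simp
qed

lemma w0: "w 0 = \<alpha>"
proof -
  have "w 0 = min (At 0) (Bt 0)" by (rule w_eq) simp
  moreover have "Bt 0 = \<beta> - Pm 1" unfolding Bt_def Pm_def by simp
  moreover have "Pm 1 \<le> \<beta> - \<alpha>" using lower int_sm01 by simp
  ultimately show ?thesis using At0 by simp
qed

lemma w1: "w 1 = \<beta>"
proof -
  have "w 1 = min (At 1) (Bt 1)" by (rule w_eq) simp
  moreover have "At 1 = \<alpha> + Pp 1" unfolding At_def by simp
  moreover have "\<beta> - \<alpha> \<le> Pp 1" using upper int_sp01 by simp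
  ultimately show ?thesis using Bt1 by simp
qed

lemma w_cont: "continuous_on {0..1} w"
proof -
  have "continuous_on {0..1} (\<lambda>x. min (At x) (Bt x))"
    using At_cont Bt_cont by (rule continuous_on_min)
  moreover have "\<And>x. x \<in> {0..1} \<Longrightarrow> min (At x) (Bt x) = w x" using w_eq by simp
  ultimately show ?thesis by (rule continuous_on_eq)
qed

lemma wB: "0 \<le> s \<Longrightarrow> s \<le> x \<Longrightarrow> x \<le> 1 \<Longrightarrow> w x - w s \<ge> Bt x - Bt s"
  using mono_AB[of s x] w_eq[of s] w_eq[of x] by (auto simp: min_def)

lemma wA: "0 \<le> x \<Longrightarrow> x \<le> s \<Longrightarrow> s \<le> 1 \<Longrightarrow> w x - w s \<ge> At x - At s"
  using mono_AB[of x s] w_eq[of s] w_eq[of x] by (auto simp: min_def)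

lemma small3: "0 < (d::real) \<Longrightarrow> 0 < e \<Longrightarrow> 0 < r \<Longrightarrow> \<exists>k>0. k < d \<and> k < e \<and> k < r"
  by (metis field_lbound_gt_zero order.strict_trans)

lemma gp_in: "x \<in> {0..1} \<Longrightarrow> gp x = sp x" unfolding gp_def by simp
lemma gm_in: "x \<in> {0..1} \<Longrightarrow> gm x = sm x" unfolding gm_def by simp

lemma w_sub: "visc_subsol H a w"
  unfolding visc_subsol_def
proof (intro ballI allI impI)
  fix s0 :: real and \<phi> :: "real \<Rightarrow> real"
  assume s0: "s0 \<in> {0<..<1}" and C1: "C1_fun \<phi>"
  assume "\<exists>e>0. \<forall>s\<in>{0<..<1}. \<bar>s - s0\<bar> < e \<longrightarrow> w s - \<phi> s \<le> w s0 - \<phi> s0"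
  then obtain e where e: "e > 0" "\<forall>s\<in>{0<..<1}. \<bar>s - s0\<bar> < e \<longrightarrow> w s - \<phi> s \<le> w s0 - \<phi> s0"
    by blast
  define D where "D = deriv \<phi> s0"
  have dphi: "(\<phi> has_real_derivative D) (at s0)" unfolding D_def by (rule C1D[OF C1])
  have s01: "s0 \<in> {0..1}" using s0 by auto
  have ge: "D \<ge> sm s0"
  proof (rule ccontr)
    assume "\<not> D \<ge> sm s0"
    then have neg: "D - gm s0 < 0" using gm_in[OF s01] by simp
    have "((\<lambda>x. \<phi> x - Bt x) has_real_derivative D - gm s0) (at s0)"
      by (rule DERIV_diff[OF dphi Bt_deriv])
    from DERIV_neg_dec_right[OF this neg] obtain d where d: "d > 0"
      "\<forall>h>0. h < d \<longrightarrow> \<phi> s0 - Bt s0 > \<phi> (s0 + h) - Bt (s0 + h)" by blast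
    obtain k where k: "k > 0" "k < d" "k < e" "s0 + k < 1"
      using small3[OF d(1) e(1), of "1 - s0"] s0 by auto
    have x: "s0 + k \<in> {0<..<1}" "\<bar>s0 + k - s0\<bar> < e" using k s0 by auto
    have "w (s0 + k) - \<phi> (s0 + k) \<le> w s0 - \<phi> s0" using e(2) x by blast
    moreover have "w (s0 + k) - w s0 \<ge> Bt (s0 + k) - Bt s0" using wB[of s0 "s0+k"] s0 k by auto
    moreover have "\<phi> s0 - Bt s0 > \<phi> (s0 + k) - Bt (s0 + k)" using d k by blast
    ultimately show False by linarith
  qed
  have le: "D \<le> sp s0"
  proof (rule ccontr)
    assume "\<not> D \<le> sp s0"
    then have pos: "D - gp s0 > 0" using gp_in[OF s01] by simp
    have "((\<lambda>x. \<phi> x - At x) has_real_derivative D - gp s0) (at s0)"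
      by (rule DERIV_diff[OF dphi At_deriv])
    from DERIV_pos_inc_left[OF this pos] obtain d where d: "d > 0"
      "\<forall>h>0. h < d \<longrightarrow> \<phi> (s0 - h) - At (s0 - h) < \<phi> s0 - At s0" by blast
    obtain k where k: "k > 0" "k < d" "k < e" "s0 - k > 0"
      using small3[OF d(1) e(1), of "s0"] s0 by auto
    have x: "s0 - k \<in> {0<..<1}" "\<bar>s0 - k - s0\<bar> < e" using k s0 by auto
    have "w (s0 - k) - \<phi> (s0 - k) \<le> w s0 - \<phi> s0" using e(2) x by blast
    moreover have "w (s0 - k) - w s0 \<ge> At (s0 - k) - At s0" using wA[of "s0-k" s0] s0 k by auto
    moreover have "\<phi> (s0 - k) - At (s0 - k) < \<phi> s0 - At s0" using d k by blast
    ultimately show False by linarith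
  qed
  show "H s0 (deriv \<phi> s0) \<le> a" using interval(2)[OF s01] ge le unfolding D_def by blast
qed

lemma w_super: "visc_supersol H a w"
  unfolding visc_supersol_def
proof (intro ballI allI impI)
  fix s0 :: real and \<phi> :: "real \<Rightarrow> real"
  assume s0: "s0 \<in> {0<..<1}" and C1: "C1_fun \<phi>"
  assume "\<exists>e>0. \<forall>s\<in>{0<..<1}. \<bar>s - s0\<bar> < e \<longrightarrow> w s - \<phi> s \<ge> w s0 - \<phi> s0"
  then obtain e where e: "e > 0" "\<forall>s\<in>{0<..<1}. \<bar>s - s0\<bar> < e \<longrightarrow> w s - \<phi> s \<ge> w s0 - \<phi> s0"
    by blast
  define D where "D = deriv \<phi> s0"
  have dphi: "(\<phi> has_real_derivative D) (at s0)" unfolding D_def by (rule C1D[OF C1])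
  have s01: "s0 \<in> {0..1}" using s0 by auto
  define d where "d = min e (min s0 (1 - s0))"
  have d: "d > 0" using e s0 unfolding d_def by auto
  have near: "y \<in> {0<..<1} \<and> \<bar>y - s0\<bar> < e" if "\<bar>s0 - y\<bar> < d" for y
    using that unfolding d_def by auto
  have "D = sp s0 \<or> D = sm s0"
  proof (cases "At s0 \<le> Bt s0")
    case True
    have "((\<lambda>x. At x - \<phi> x) has_real_derivative gp s0 - D) (at s0)"
      by (rule DERIV_diff[OF At_deriv dphi])
    moreover have "\<forall>y. \<bar>s0 - y\<bar> < d \<longrightarrow> At s0 - \<phi> s0 \<le> At y - \<phi> y"
    proof (intro allI impI)
      fix y assume "\<bar>s0 - y\<bar> < d"
      then have y: "y \<in> {0<..<1}" "\<bar>y - s0\<bar> < e" using near by auto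
      have "w y - \<phi> y \<ge> w s0 - \<phi> s0" using e(2) y by blast
      moreover have "w y \<le> At y" using w_eq[of y] y by auto
      moreover have "w s0 = At s0" using w_eq[OF s01] True by simp
      ultimately show "At s0 - \<phi> s0 \<le> At y - \<phi> y" by linarith
    qed
    ultimately have "gp s0 - D = 0" using DERIV_local_min d by blast
    then show ?thesis using gp_in[OF s01] by simp
  next
    case False
    have "((\<lambda>x. Bt x - \<phi> x) has_real_derivative gm s0 - D) (at s0)"
      by (rule DERIV_diff[OF Bt_deriv dphi])
    moreover have "\<forall>y. \<bar>s0 - y\<bar> < d \<longrightarrow> Bt s0 - \<phi> s0 \<le> Bt y - \<phi> y"
    proof (intro allI impI)
      fix y assume "\<bar>s0 - y\<bar> < d"
      then have y: "y \<in> {0<..<1}" "\<bar>y - s0\<bar> < e" using near by auto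
      have "w y - \<phi> y \<ge> w s0 - \<phi> s0" using e(2) y by blast
      moreover have "w y \<le> Bt y" using w_eq[of y] y by auto
      moreover have "w s0 = Bt s0" using w_eq[OF s01] False by simp
      ultimately show "Bt s0 - \<phi> s0 \<le> Bt y - \<phi> y" by linarith
    qed
    ultimately have "gm s0 - D = 0" using DERIV_local_min d by blast
    then show ?thesis using gm_in[OF s01] by simp
  qed
  then show "H s0 (deriv \<phi> s0) \<ge> a" using interval(4,5)[OF s01] unfolding D_def by auto
qed

end


lemma test1:
  assumes F: "\<And>x. (F has_real_derivative F' x) (at x)" and c: "continuous_on UNIV F'"
  shows "C1_fun (\<lambda>x. F x + l * x + M * pen c x)"
    "deriv (\<lambda>x. F x + l * x + M * pen c x) x = F' x + l + M * (2 * max (x - c) 0)"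
proof -
  have d: "((\<lambda>x. F x + l * x + M * pen c x) has_real_derivative F' x + l + M * (2 * max (x - c) 0)) (at x)" for x
    using F[of x] pen_deriv[of c x] by (auto intro!: derivative_eq_intros)
  have "continuous_on UNIV (\<lambda>x. F' x + l + M * (2 * max (x - c) 0))"
    by (intro continuous_intros c)
  then show "C1_fun (\<lambda>x. F x + l * x + M * pen c x)"
    "deriv (\<lambda>x. F x + l * x + M * pen c x) x = F' x + l + M * (2 * max (x - c) 0)"
    using C1I[OF d] by auto
qed

lemma test2:
  assumes F: "\<And>x. (F has_real_derivative F' x) (at x)" and c: "continuous_on UNIV F'"
  shows "C1_fun (\<lambda>x. F x - l * x + M * pen2 c x)"
    "deriv (\<lambda>x. F x - l * x + M * pen2 c x) x = F' x - l + M * (- (2 * max (c - x) 0))"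
proof -
  have d: "((\<lambda>x. F x - l * x + M * pen2 c x) has_real_derivative F' x - l + M * (- (2 * max (c - x) 0))) (at x)" for x
    using F[of x] pen2_deriv[of c x] by (auto intro!: derivative_eq_intros)
  have "continuous_on UNIV (\<lambda>x. F' x - l + M * (- (2 * max (c - x) 0)))"
    by (intro continuous_intros c)
  then show "C1_fun (\<lambda>x. F x - l * x + M * pen2 c x)"
    "deriv (\<lambda>x. F x - l * x + M * pen2 c x) x = F' x - l + M * (- (2 * max (c - x) 0))"
    using C1I[OF d] by auto
qed

lemma pos_frac: "0 < (G::real) \<Longrightarrow> 0 < r \<Longrightarrow> \<exists>l>0. l * r < G"
proof -
  assume G: "0 < G" and r: "0 < r"
  have "(G / (2 * r)) * r = G / 2" using r by (simp add: field_simps)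
  then show ?thesis using G r by (intro exI[of _ "G / (2 * r)"]) auto
qed

locale setting3 = setting2 +
  fixes u :: "real \<Rightarrow> real"
  assumes ucont: "continuous_on {0..1} u" and usol: "visc_sol H a u"
    and u0: "u 0 = \<alpha>" and u1: "u 1 = \<beta>"
begin

lemma usub: "visc_subsol H a u" and usuper: "visc_supersol H a u"
  using usol unfolding visc_sol_def by auto

lemma U1:
  assumes st: "0 \<le> s" "s \<le> t" "t \<le> 1"
  shows "u t - u s \<le> At t - At s"
proof (rule ccontr)
  assume "\<not> ?thesis"
  then have G: "(u t - u s) - (At t - At s) > 0" by simp
  have st': "s < t" using G st by (cases "s = t") auto
  obtain l where l: "l > 0" "l * (t - s) < (u t - u s) - (At t - At s)"
    using pos_frac[OF G, of "t - s"] st' by auto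
  define f where "f x = u x - At x - l * x" for x
  have fc: "continuous_on {s..t} f" unfolding f_def
    by (intro continuous_intros continuous_on_subset[OF ucont] At_cont) (use st in auto)
  have "f s < f t" using l unfolding f_def by (simp add: algebra_simps)
  then obtain x0 c M where P: "s < x0" "x0 < t" "M \<ge> 0"
    "\<forall>x\<in>{s..t}. f x - M * pen c x \<le> f x0 - M * pen c x0"
    using peak[OF fc st'] by blast
  define \<phi> where "\<phi> x = At x + l * x + M * pen c x" for x
  have C1: "C1_fun \<phi>" and dphi: "deriv \<phi> x0 = gp x0 + l + M * (2 * max (x0 - c) 0)"
    unfolding \<phi>_def[abs_def] using test1[OF At_deriv gp_cont] by auto
  have x0: "x0 \<in> {0<..<1}" "x0 \<in> {0..1}" using P st by auto
  have "\<exists>e>0. \<forall>y\<in>{0<..<1}. \<bar>y - x0\<bar> < e \<longrightarrow> u y - \<phi> y \<le> u x0 - \<phi> x0"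
  proof (intro exI[of _ "min (x0 - s) (t - x0)"] conjI ballI impI)
    show "min (x0 - s) (t - x0) > 0" using P by auto
    fix y assume "y \<in> {0<..<1}" "\<bar>y - x0\<bar> < min (x0 - s) (t - x0)"
    then have "y \<in> {s..t}" by auto
    then have "f y - M * pen c y \<le> f x0 - M * pen c x0" using P(4) by blast
    then show "u y - \<phi> y \<le> u x0 - \<phi> x0" unfolding f_def \<phi>_def by (simp add: algebra_simps)
  qed
  then have "H x0 (deriv \<phi> x0) \<le> a" using usub x0(1) C1 unfolding visc_subsol_def by blast
  then have "deriv \<phi> x0 \<le> sp x0" using interval(2)[OF x0(2)] by blast
  moreover have "M * (2 * max (x0 - c) 0) \<ge> 0" using P(3) by simp
  ultimately show False using dphi gp_in[OF x0(2)] l(1) by linarith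
qed

lemma U2:
  assumes st: "0 \<le> s" "s \<le> t" "t \<le> 1"
  shows "u t - u s \<ge> Bt t - Bt s"
proof (rule ccontr)
  assume "\<not> ?thesis"
  then have G: "(Bt t - Bt s) - (u t - u s) > 0" by simp
  have st': "s < t" using G st by (cases "s = t") auto
  obtain l where l: "l > 0" "l * (t - s) < (Bt t - Bt s) - (u t - u s)"
    using pos_frac[OF G, of "t - s"] st' by auto
  define f where "f x = u x - Bt x + l * x" for x
  have fc: "continuous_on {s..t} f" unfolding f_def
    by (intro continuous_intros continuous_on_subset[OF ucont] Bt_cont) (use st in auto)
  have "f t < f s" using l unfolding f_def by (simp add: algebra_simps)
  then obtain x0 c M where P: "s < x0" "x0 < t" "M \<ge> 0"
    "\<forall>x\<in>{s..t}. f x - M * pen2 c x \<le> f x0 - M * pen2 c x0"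
    using peak2[OF fc st'] by blast
  define \<phi> where "\<phi> x = Bt x - l * x + M * pen2 c x" for x
  have C1: "C1_fun \<phi>" and dphi: "deriv \<phi> x0 = gm x0 - l + M * (- (2 * max (c - x0) 0))"
    unfolding \<phi>_def[abs_def] using test2[OF Bt_deriv gm_cont] by auto
  have x0: "x0 \<in> {0<..<1}" "x0 \<in> {0..1}" using P st by auto
  have "\<exists>e>0. \<forall>y\<in>{0<..<1}. \<bar>y - x0\<bar> < e \<longrightarrow> u y - \<phi> y \<le> u x0 - \<phi> x0"
  proof (intro exI[of _ "min (x0 - s) (t - x0)"] conjI ballI impI)
    show "min (x0 - s) (t - x0) > 0" using P by auto
    fix y assume "y \<in> {0<..<1}" "\<bar>y - x0\<bar> < min (x0 - s) (t - x0)"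
    then have "y \<in> {s..t}" by auto
    then have "f y - M * pen2 c y \<le> f x0 - M * pen2 c x0" using P(4) by blast
    then show "u y - \<phi> y \<le> u x0 - \<phi> x0" unfolding f_def \<phi>_def by (simp add: algebra_simps)
  qed
  then have "H x0 (deriv \<phi> x0) \<le> a" using usub x0(1) C1 unfolding visc_subsol_def by blast
  then have "deriv \<phi> x0 \<ge> sm x0" using interval(2)[OF x0(2)] by blast
  moreover have "M * (2 * max (c - x0) 0) \<ge> 0" using P(3) by simp
  ultimately show False using dphi gm_in[OF x0(2)] l(1) by linarith
qed

lemma u_le_w: "x \<in> {0..1} \<Longrightarrow> u x \<le> w x"
proof -
  assume x: "x \<in> {0..1}"
  have "u x - u 0 \<le> At x - At 0" using U1[of 0 x] x by auto
  moreover have "u 1 - u x \<ge> Bt 1 - Bt x" using U2[of x 1] x by auto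
  ultimately show ?thesis using w_eq[OF x] u0 u1 At0 Bt1 by simp
qed

end


context setting3 begin

lemma quasi:
  assumes lc: "continuous_on UNIV ell" and lb: "\<forall>x\<in>{0..1}. sm x < ell x \<and> ell x < sp x"
    and x: "x \<in> {0..1}"
  shows "u x - prim ell x \<ge> min (u 0 - prim ell 0) (u 1 - prim ell 1)"
proof -
  define g where "g y = u y - prim ell y" for y
  have pc: "continuous_on {0..1} (prim ell)"
    using prim_deriv[OF lc] by (meson DERIV_isCont continuous_at_imp_continuous_on)
  have gc: "continuous_on {0..1} g" unfolding g_def by (intro continuous_intros ucont pc)
  obtain x0 where x0: "x0 \<in> {0..1}" "\<forall>y\<in>{0..1}. g x0 \<le> g y"
    using continuous_attains_inf[OF compact_Icc _ gc] by auto
  have "x0 = 0 \<or> x0 = 1"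
  proof (rule ccontr)
    assume "\<not> (x0 = 0 \<or> x0 = 1)"
    then have x0i: "x0 \<in> {0<..<1}" using x0 by auto
    have C1: "C1_fun (prim ell)" using prim_C1[OF lc] .
    have dd: "deriv (prim ell) x0 = ell x0" using prim_deriv[OF lc] DERIV_imp_deriv by blast
    have "\<exists>e>0. \<forall>s\<in>{0<..<1}. \<bar>s - x0\<bar> < e \<longrightarrow> u s - prim ell s \<ge> u x0 - prim ell x0"
      using x0(2) unfolding g_def by (intro exI[of _ 1]) auto
    then have "H x0 (deriv (prim ell) x0) \<ge> a" using usuper x0i C1 unfolding visc_supersol_def by blast
    moreover have "H x0 (ell x0) < a" using interval(3)[OF x0(1)] lb x0(1) by blast
    ultimately show False using dd by simp
  qed
  then have "min (g 0) (g 1) \<le> g x0" by auto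
  moreover have "g x0 \<le> g x" using x0(2) x by blast
  ultimately show ?thesis unfolding g_def by linarith
qed

lemma gp_gm_bound:
  assumes R: "\<And>s. s \<in> {0..1} \<Longrightarrow> \<bar>sp s\<bar> \<le> R \<and> \<bar>sm s\<bar> \<le> R"
  shows "gp y - gm y \<le> 2 * R"
proof -
  have "\<bar>sp (max 0 (min 1 y))\<bar> \<le> R \<and> \<bar>sm (max 0 (min 1 y))\<bar> \<le> R" using R[OF clamp01] .
  then show ?thesis unfolding gp_def gm_def ext_def by linarith
qed

lemma u_ge_w_nd:
  assumes nd: "a > aH H" and x: "x \<in> {0..1}"
  shows "u x \<ge> w x"
proof (cases "x = 0 \<or> x = 1")
  case True
  then show ?thesis using w0 w1 u0 u1 by auto
next
  case False
  then have xi: "0 < x" "x < 1" using x by auto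
  show ?thesis
  proof (rule ccontr)
    assume "\<not> ?thesis"
    then have dpos: "w x - u x > 0" by simp
    define ep where "ep = (w x - u x) / 3"
    have ep: "ep > 0" "w x - u x = 3 * ep" unfolding ep_def using dpos by auto
    obtain R where R: "R \<ge> 0" "\<And>s. s \<in> {0..1} \<Longrightarrow> \<bar>sp s\<bar> \<le> R \<and> \<bar>sm s\<bar> \<le> R"
      using sig_bound by blast
    have gg: "\<And>y. gp y - gm y \<le> 2 * R" using gp_gm_bound[OF R(2)] by blast
    obtain th1 where th1: "th1 > 0" "th1 * (2 * R + 1) < ep" using pos_frac[OF ep(1), of "2*R+1"] R by auto
    define th where "th = min th1 (1/4)"
    have th: "th > 0" "th \<le> 1/4" "th \<le> th1" using th1 unfolding th_def by auto
    define T where "T = th * (2 * R)"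
    have T: "T \<ge> 0" "T < ep"
    proof -
      show "T \<ge> 0" unfolding T_def using th R by simp
      have "th * (2 * R) \<le> th1 * (2 * R + 1)" using th R th1 by (intro mult_mono) auto
      then show "T < ep" using th1 unfolding T_def by linarith
    qed
    have Tg: "th * (gp y - gm y) \<le> T" for y unfolding T_def using gg[of y] th by (intro mult_left_mono) auto
    have gm_gp: "gm y \<le> gp y" for y using gm_le_gp .
    obtain d1 where d1: "d1 > 0" "\<And>y. \<bar>y - x\<bar> < d1 \<Longrightarrow> \<bar>At y - At x\<bar> < ep"
    proof -
      have "isCont At x" using At_deriv by (rule DERIV_isCont)
      then show ?thesis using ep(1) that unfolding continuous_at_eps_delta dist_real_def by blast
    qed
    obtain d2 where d2: "d2 > 0" "\<And>y. \<bar>y - x\<bar> < d2 \<Longrightarrow> \<bar>Bt y - Bt x\<bar> < ep"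
    proof -
      have "isCont Bt x" using Bt_deriv by (rule DERIV_isCont)
      then show ?thesis using ep(1) that unfolding continuous_at_eps_delta dist_real_def by blast
    qed
    obtain eta where eta: "eta > 0" "eta < d1" "eta < d2" "eta < 1 - x"
      using small3[OF d1(1) d2(1), of "1 - x"] xi by auto
    define lam where "lam y = max th (min (1 - th) (1 - th - (y - x) / eta))" for y
    have lam_b: "th \<le> lam y" "lam y \<le> 1 - th" for y unfolding lam_def using th by auto
    have lam_a: "y \<le> x \<Longrightarrow> lam y = 1 - th" for y
    proof -
      assume "y \<le> x"
      then have "(y - x) / eta \<le> 0" using eta(1) by (simp add: divide_nonpos_pos)
      then show ?thesis unfolding lam_def using th by auto
    qed
    have lam_c: "x + eta \<le> y \<Longrightarrow> lam y = th" for y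
    proof -
      assume "x + eta \<le> y"
      then have "1 \<le> (y - x) / eta" using eta(1) by (simp add: le_divide_eq_1_pos)
      then show ?thesis unfolding lam_def using th by auto
    qed
    define ell where "ell y = lam y * gp y + (1 - lam y) * gm y" for y
    have lamc: "continuous_on UNIV lam" unfolding lam_def by (intro continuous_intros) (use eta in auto)
    have ellc: "continuous_on UNIV ell" unfolding ell_def
      by (intro continuous_intros lamc gp_cont gm_cont)
    have ell_eq: "ell y = gm y + lam y * (gp y - gm y)" "ell y = gp y - (1 - lam y) * (gp y - gm y)" for y
      unfolding ell_def by (simp_all add: algebra_simps)
    have lb: "\<forall>y\<in>{0..1}. sm y < ell y \<and> ell y < sp y"
    proof
      fix y :: real assume y: "y \<in> {0..1}"
      have pos: "gp y - gm y > 0" using nondeg[OF nd y] gp_in[OF y] gm_in[OF y] by simp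
      have "lam y * (gp y - gm y) > 0" "(1 - lam y) * (gp y - gm y) > 0"
        using lam_b[of y] th pos by (auto intro: mult_pos_pos)
      then show "sm y < ell y \<and> ell y < sp y" using ell_eq[of y] gp_in[OF y] gm_in[OF y] by linarith
    qed
    define L where "L = prim ell"
    have dL: "(L has_real_derivative ell y) (at y)" for y unfolding L_def using prim_deriv[OF ellc] .
    have dPp: "(Pp has_real_derivative gp y) (at y)" for y unfolding Pp_def using prim_deriv[OF gp_cont] .
    have dPm: "(Pm has_real_derivative gm y) (at y)" for y unfolding Pm_def using prim_deriv[OF gm_cont] .
    have I1': "(\<lambda>y. L y - Pp y + T * y) 0 \<le> (\<lambda>y. L y - Pp y + T * y) x"
    proof (rule DERIV_nonneg_imp_nondecreasing[of 0 x "\<lambda>y. L y - Pp y + T * y"])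
      show "0 \<le> x" using xi by simp
      fix y assume "0 \<le> y" "y \<le> x"
      have "((\<lambda>y. L y - Pp y + T * y) has_real_derivative ell y - gp y + T) (at y)"
        using dL[of y] dPp[of y] by (auto intro!: derivative_eq_intros)
      moreover have "ell y - gp y + T \<ge> 0" using ell_eq(2)[of y] lam_a[OF \<open>y \<le> x\<close>] Tg[of y] by simp
      ultimately show "\<exists>z. ((\<lambda>y. L y - Pp y + T * y) has_real_derivative z) (at y) \<and> 0 \<le> z" by blast
    qed
    have I1: "L 0 - Pp 0 + T * 0 \<le> L x - Pp x + T * x" using I1' by simp
    have I2': "(\<lambda>y. Pp y - L y) x \<le> (\<lambda>y. Pp y - L y) (x + eta)"
    proof (rule DERIV_nonneg_imp_nondecreasing[of x "x + eta" "\<lambda>y. Pp y - L y"])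
      show "x \<le> x + eta" using eta by simp
      fix y
      have "((\<lambda>y. Pp y - L y) has_real_derivative gp y - ell y) (at y)"
        using dL[of y] dPp[of y] by (auto intro!: derivative_eq_intros)
      moreover have "gp y - ell y \<ge> 0" using ell_eq(2)[of y] lam_b[of y] gm_gp[of y] th
        by (simp add: mult_nonneg_nonneg)
      ultimately show "\<exists>z. ((\<lambda>y. Pp y - L y) has_real_derivative z) (at y) \<and> 0 \<le> z" by blast
    qed
    have I2: "Pp x - L x \<le> Pp (x + eta) - L (x + eta)" using I2' by simp
    have I3': "(\<lambda>y. Pm y - L y + T * y) (x + eta) \<le> (\<lambda>y. Pm y - L y + T * y) 1"
    proof (rule DERIV_nonneg_imp_nondecreasing[of "x + eta" 1 "\<lambda>y. Pm y - L y + T * y"])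
      show "x + eta \<le> 1" using eta by simp
      fix y assume "x + eta \<le> y" "y \<le> 1"
      have "((\<lambda>y. Pm y - L y + T * y) has_real_derivative gm y - ell y + T) (at y)"
        using dL[of y] dPm[of y] by (auto intro!: derivative_eq_intros)
      moreover have "gm y - ell y + T \<ge> 0" using ell_eq(1)[of y] lam_c[OF \<open>x + eta \<le> y\<close>] Tg[of y] by simp
      ultimately show "\<exists>z. ((\<lambda>y. Pm y - L y + T * y) has_real_derivative z) (at y) \<and> 0 \<le> z" by blast
    qed
    have I3: "Pm (x + eta) - L (x + eta) + T * (x + eta) \<le> Pm 1 - L 1 + T * 1" using I3' by simp
    have Tx: "T * x \<le> T" using T(1) xi by (simp add: mult_left_le)
    have Txe: "T * (x + eta) \<ge> 0" using T(1) xi eta by simp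
    have Q: "u x - L x \<ge> min (u 0 - L 0) (u 1 - L 1)" unfolding L_def using quasi[OF ellc lb x] .
    have wx: "w x = min (At x) (Bt x)" using w_eq[OF x] .
    have Pp0: "Pp 0 = 0" by (simp add: Pp_def)
    have L0: "L 0 = 0" by (simp add: L_def)
    show False
    proof (cases "u 0 - L 0 \<le> u 1 - L 1")
      case True
      then have "u x \<ge> \<alpha> + L x" using Q u0 L0 by simp
      moreover have "At x = \<alpha> + Pp x" by (simp add: At_def)
      ultimately have "u x \<ge> At x - T" using I1 Pp0 L0 Tx by simp
      moreover have "w x \<le> At x" using wx by simp
      ultimately show False using ep T by linarith
    next
      case False
      then have "u x \<ge> \<beta> - L 1 + L x" using Q u1 by simp
      moreover have "Bt (x + eta) = \<beta> - Pm 1 + Pm (x + eta)" by (simp add: Bt_def)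
      moreover have "At (x + eta) - At x = Pp (x + eta) - Pp x" by (simp add: At_def)
      moreover have "\<bar>At (x + eta) - At x\<bar> < ep" "\<bar>Bt (x + eta) - Bt x\<bar> < ep"
        using d1(2)[of "x + eta"] d2(2)[of "x + eta"] eta by auto
      moreover have "w x \<le> Bt x" using wx by simp
      ultimately show False using I2 I3 Txe ep T by linarith
    qed
  qed
qed

lemma u_ge_w: "x \<in> {0..1} \<Longrightarrow> u x \<ge> w x"
proof (cases "a > aH H")
  case True
  then show "x \<in> {0..1} \<Longrightarrow> u x \<ge> w x" using u_ge_w_nd by blast
next
  case False
  then have aa: "a = aH H" using a_ge by simp
  have geq: "gp y = gm y" for y unfolding gp_def gm_def ext_def using deg[OF aa clamp01] by simp
  then have "gp = gm" by (simp add: fun_eq_iff)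
  then have "Pp = Pm" unfolding Pp_def Pm_def by simp
  moreover have "Pm 1 \<le> \<beta> - \<alpha>" "\<beta> - \<alpha> \<le> Pp 1" using lower upper int_sm01 int_sp01 by auto
  ultimately have AB: "At y = Bt y" for y unfolding At_def Bt_def by simp
  assume x: "x \<in> {0..1}"
  have "u x - u 0 \<ge> Bt x - Bt 0" using U2[of 0 x] x by auto
  moreover have "Bt 0 = \<alpha>" using AB[of 0] At0 by simp
  ultimately show "u x \<ge> w x" using w_eq[OF x] AB[of x] u0 by simp
qed

end

theorem proposition5p2:
  fixes H :: "real \<Rightarrow> real \<Rightarrow> real" and a \<alpha> \<beta> :: real
  assumes cont: "continuous_on ({0..1} \<times> UNIV) (\<lambda>(s, p). H s p)"
    and coercive: "\<forall>M. \<exists>R. \<forall>s\<in>{0..1}. \<forall>p. \<bar>p\<bar> > R \<longrightarrow> H s p > M"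
    and quasiconvex: "\<forall>s\<in>{0..1}. \<forall>b. convex {p. H s p \<le> b}"
    and interior_cond: "\<forall>s\<in>{0..1}. \<forall>b. interior {p. H s p \<le> b} = {p. H s p < b}"
    and a_ge: "a \<ge> aH H"
    and a_eq: "a = aH H \<Longrightarrow> (\<exists>c. \<forall>s\<in>{0..1}. minH H s = c)"
    and lower: "integral {0..1} (sigma_minus H a) \<le> \<beta> - \<alpha>"
    and upper: "\<beta> - \<alpha> \<le> integral {0..1} (sigma_plus H a)"
  shows "let w = (\<lambda>s. min (\<alpha> + integral {0..s} (sigma_plus H a))
                          (\<beta> - integral {s..1} (sigma_minus H a)))
         in continuous_on {0..1} w \<and> visc_sol H a w \<and> w 0 = \<alpha> \<and> w 1 = \<beta> \<and>
            (\<forall>u. continuous_on {0..1} u \<and> visc_sol H a u \<and> u 0 = \<alpha> \<and> u 1 = \<beta>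
                 \<longrightarrow> (\<forall>s\<in>{0..1}. u s = w s))"
proof -
  interpret S2: setting2 H a \<alpha> \<beta>
    by (unfold_locales) (fact cont coercive quasiconvex interior_cond a_ge a_eq lower upper)+
  have uniq: "\<forall>s\<in>{0..1}. u s = S2.w s"
    if u: "continuous_on {0..1} u" "visc_sol H a u" "u 0 = \<alpha>" "u 1 = \<beta>" for u
  proof -
    interpret S3: setting3 H a \<alpha> \<beta> u
      by (unfold_locales) (fact u)+
    show ?thesis using S3.u_le_w S3.u_ge_w by (meson order_antisym)
  qed
  show ?thesis
    unfolding Let_def S2.w_def[symmetric]
    using S2.w_cont S2.w_sub S2.w_super S2.w0 S2.w1 uniq unfolding visc_sol_def by blast
qed

end
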